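(* For a graph $G$, $\gamma_{(2,1,0)}(G)=3$ if and only if $\gamma_{\times2}(G)=\gamma(G)+1=3$.
   Context: All graphs are finite and simple; $N(v)$ is the open neighbourhood and $N[v]=N(v)\cup\{v\}$. $\gamma_{(2,1,0)}(G)$ is the minimum of $\sum_v f(v)$ over functions $f:V(G)\to\{0,1,2\}$ such that $\sum_{u\in N(v)}f(u)\ge2$ whenever $f(v)=0$ and $\sum_{u\in N(v)}f(u)\ge1$ whenever $f(v)=1$. $\gamma(G)$ is the domination number and $\gamma_{\times2}(G)$ is the minimum size of $D\subseteq V(G)$ with $|N[v]\cap D|\ge2$ for every $v\in V(G)$ (defined when $G$ has no isolated vertex). *)

theory Defs
  imports Main
begin

definition simple_graph :: "'a set \<Rightarrow> ('a \<Rightarrow> 'a \<Rightarrow> bool) \<Rightarrow> bool" where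
  "simple_graph V E \<longleftrightarrow> finite V \<and> (\<forall>u v. E u v \<longrightarrow> E v u)
     \<and> (\<forall>v. \<not> E v v) \<and> (\<forall>u v. E u v \<longrightarrow> u \<in> V \<and> v \<in> V)"

definition open_nbhd :: "'a set \<Rightarrow> ('a \<Rightarrow> 'a \<Rightarrow> bool) \<Rightarrow> 'a \<Rightarrow> 'a set" where
  "open_nbhd V E v = {u \<in> V. E v u}"

definition closed_nbhd :: "'a set \<Rightarrow> ('a \<Rightarrow> 'a \<Rightarrow> bool) \<Rightarrow> 'a \<Rightarrow> 'a set" where
  "closed_nbhd V E v = insert v (open_nbhd V E v)"

definition no_isolated :: "'a set \<Rightarrow> ('a \<Rightarrow> 'a \<Rightarrow> bool) \<Rightarrow> bool" where
  "no_isolated V E \<longleftrightarrow> (\<forall>v\<in>V. open_nbhd V E v \<noteq> {})"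

definition dominating_set :: "'a set \<Rightarrow> ('a \<Rightarrow> 'a \<Rightarrow> bool) \<Rightarrow> 'a set \<Rightarrow> bool" where
  "dominating_set V E D \<longleftrightarrow> D \<subseteq> V \<and> (\<forall>v\<in>V. closed_nbhd V E v \<inter> D \<noteq> {})"

definition domination_number :: "'a set \<Rightarrow> ('a \<Rightarrow> 'a \<Rightarrow> bool) \<Rightarrow> nat" where
  "domination_number V E = (LEAST k. \<exists>D. dominating_set V E D \<and> card D = k)"

definition double_dominating_set :: "'a set \<Rightarrow> ('a \<Rightarrow> 'a \<Rightarrow> bool) \<Rightarrow> 'a set \<Rightarrow> bool" where
  "double_dominating_set V E D \<longleftrightarrow> D \<subseteq> V \<and> (\<forall>v\<in>V. card (closed_nbhd V E v \<inter> D) \<ge> 2)"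

text \<open>Double domination number; only meaningful when there is no isolated vertex.\<close>
definition double_domination_number :: "'a set \<Rightarrow> ('a \<Rightarrow> 'a \<Rightarrow> bool) \<Rightarrow> nat" where
  "double_domination_number V E = (LEAST k. \<exists>D. double_dominating_set V E D \<and> card D = k)"

definition dom210_function :: "'a set \<Rightarrow> ('a \<Rightarrow> 'a \<Rightarrow> bool) \<Rightarrow> ('a \<Rightarrow> nat) \<Rightarrow> bool" where
  "dom210_function V E f \<longleftrightarrow> (\<forall>v\<in>V. f v \<le> 2
      \<and> (f v = 0 \<longrightarrow> (\<Sum>u\<in>open_nbhd V E v. f u) \<ge> 2)
      \<and> (f v = 1 \<longrightarrow> (\<Sum>u\<in>open_nbhd V E v. f u) \<ge> 1))"

definition dom210_number :: "'a set \<Rightarrow> ('a \<Rightarrow> 'a \<Rightarrow> bool) \<Rightarrow> nat" where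
  "dom210_number V E = (LEAST w. \<exists>f. dom210_function V E f \<and> (\<Sum>v\<in>V. f v) = w)"

end

theory Submission
  imports Defs
begin

lemma sum_split:
  "finite A \<Longrightarrow> \<forall>v\<in>A. f v \<le> (2::nat) \<Longrightarrow>
   sum f A = card {v\<in>A. f v = 1} + 2 * card {v\<in>A. f v = 2}"
proof (induction A rule: finite_induct)
  case empty
  then show ?case by simp
next
  case (insert x F)
  have e1: "{v\<in>insert x F. f v = 1} = (if f x = 1 then insert x {v\<in>F. f v = 1} else {v\<in>F. f v = 1})"
    by auto
  have e2: "{v\<in>insert x F. f v = 2} = (if f x = 2 then insert x {v\<in>F. f v = 2} else {v\<in>F. f v = 2})"
    by auto
  have "f x = 0 \<or> f x = 1 \<or> f x = 2" using insert.prems by auto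
  then show ?case using insert e1 e2 by auto
qed

lemma sum_ind:
  "finite A \<Longrightarrow> (\<Sum>u\<in>A. if u \<in> D then c else 0) = (c::nat) * card (A \<inter> D)"
  by (simp add: sum.If_cases Int_def)

lemma sg_facts:
  assumes "simple_graph V E"
  shows "finite V" "open_nbhd V E v \<subseteq> V" "v \<notin> open_nbhd V E v" "finite (open_nbhd V E v)"
  using assms unfolding simple_graph_def open_nbhd_def by (auto intro: finite_subset)

lemma dom_to_f:
  assumes sg: "simple_graph V E" and D: "dominating_set V E D"
  shows "dom210_function V E (\<lambda>v. if v\<in>D then 2 else 0) \<and>
         (\<Sum>v\<in>V. (\<lambda>v. if v\<in>D then 2 else 0) v) = 2 * card D"
proof
  have DV: "D \<subseteq> V" using D unfolding dominating_set_def by auto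
  show "(\<Sum>v\<in>V. (\<lambda>v. if v\<in>D then 2 else 0) v) = 2 * card D"
    using sum_ind[OF sg_facts(1)[OF sg], of D 2] DV by (simp add: Int_absorb1)
  show "dom210_function V E (\<lambda>v. if v\<in>D then 2 else 0)"
    unfolding dom210_function_def
  proof (intro ballI conjI impI)
    fix v assume v: "v \<in> V" and f0: "(if v \<in> D then 2 else 0) = (0::nat)"
    then have "v \<notin> D" by auto
    moreover have "closed_nbhd V E v \<inter> D \<noteq> {}" using D v unfolding dominating_set_def by auto
    ultimately have "open_nbhd V E v \<inter> D \<noteq> {}" unfolding closed_nbhd_def by auto
    then have "card (open_nbhd V E v \<inter> D) \<ge> 1"
      using sg_facts(4)[OF sg, of v] by (simp add: Suc_le_eq card_gt_0_iff)
    then show "2 \<le> (\<Sum>u\<in>open_nbhd V E v. (if u \<in> D then 2 else 0::nat))"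
      using sum_ind[OF sg_facts(4)[OF sg, of v], of D 2] by simp
  qed (auto split: if_splits)
qed

lemma ddom_to_f:
  assumes sg: "simple_graph V E" and D: "double_dominating_set V E D"
  shows "dom210_function V E (\<lambda>v. if v\<in>D then 1 else 0) \<and>
         (\<Sum>v\<in>V. (\<lambda>v. if v\<in>D then 1 else 0) v) = card D"
proof
  have DV: "D \<subseteq> V" using D unfolding double_dominating_set_def by auto
  show "(\<Sum>v\<in>V. (\<lambda>v. if v\<in>D then 1 else 0) v) = card D"
    using sum_ind[OF sg_facts(1)[OF sg], of D 1] DV by (simp add: Int_absorb1)
  show "dom210_function V E (\<lambda>v. if v\<in>D then 1 else 0)"
    unfolding dom210_function_def
  proof (intro ballI conjI impI)
    fix v assume v: "v \<in> V"
    have c2: "card (closed_nbhd V E v \<inter> D) \<ge> 2" using D v unfolding double_dominating_set_def by auto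
    have S: "(\<Sum>u\<in>open_nbhd V E v. (if u \<in> D then 1 else 0::nat)) = card (open_nbhd V E v \<inter> D)"
      using sum_ind[OF sg_facts(4)[OF sg, of v], of D 1] by simp
    have nv: "v \<notin> open_nbhd V E v" using sg_facts(3)[OF sg] .
    have fin: "finite (open_nbhd V E v \<inter> D)" using sg_facts(4)[OF sg, of v] by auto
    show "(if v \<in> D then 1 else 0::nat) = 0 \<Longrightarrow> 2 \<le> (\<Sum>u\<in>open_nbhd V E v. (if u \<in> D then 1 else 0::nat))"
    proof -
      assume "(if v \<in> D then 1 else 0::nat) = 0"
      then have "v \<notin> D" by (auto split: if_splits)
      then have "closed_nbhd V E v \<inter> D = open_nbhd V E v \<inter> D" unfolding closed_nbhd_def by auto
      then show ?thesis using S c2 by simp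
    qed
    show "(if v \<in> D then 1 else 0::nat) = 1 \<Longrightarrow> 1 \<le> (\<Sum>u\<in>open_nbhd V E v. (if u \<in> D then 1 else 0::nat))"
    proof -
      assume "(if v \<in> D then 1 else 0::nat) = 1"
      then have "v \<in> D" by (auto split: if_splits)
      then have "closed_nbhd V E v \<inter> D = insert v (open_nbhd V E v \<inter> D)" unfolding closed_nbhd_def by auto
      then have "card (closed_nbhd V E v \<inter> D) = Suc (card (open_nbhd V E v \<inter> D))"
        using fin nv by simp
      then show ?thesis using S c2 by simp
    qed
  qed auto
qed

lemma ddom_sub:
  assumes D: "double_dominating_set V E D" and sub: "D \<subseteq> insert z S" and SD: "S \<subseteq> D"
  shows "dominating_set V E S"
  unfolding dominating_set_def
proof (intro conjI ballI)
  show "S \<subseteq> V" using SD D unfolding double_dominating_set_def by auto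
  fix v assume v: "v \<in> V"
  show "closed_nbhd V E v \<inter> S \<noteq> {}"
  proof
    assume e: "closed_nbhd V E v \<inter> S = {}"
    have "closed_nbhd V E v \<inter> D \<subseteq> {z}" using e sub by auto
    then have "card (closed_nbhd V E v \<inter> D) \<le> 1" using card_mono[of "{z}"] by fastforce
    with D v show False unfolding double_dominating_set_def by fastforce
  qed
qed

lemma ddom_noiso:
  assumes D: "double_dominating_set V E D"
  shows "no_isolated V E"
  unfolding no_isolated_def
proof
  fix v assume v: "v \<in> V"
  show "open_nbhd V E v \<noteq> {}"
  proof
    assume e: "open_nbhd V E v = {}"
    have "closed_nbhd V E v \<inter> D \<subseteq> {v}" using e unfolding closed_nbhd_def by auto
    then have "card (closed_nbhd V E v \<inter> D) \<le> 1" using card_mono[of "{v}"] by fastforce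
    with D v show False unfolding double_dominating_set_def by fastforce
  qed
qed

lemma keyK:
  assumes sg: "simple_graph V E" and f: "dom210_function V E f"
    and w: "card {v\<in>V. f v = 1} + 2 * card {v\<in>V. f v = 2} \<le> 3"
  shows "({v\<in>V. f v = 2} = {} \<and> double_dominating_set V E {v\<in>V. f v = 1})
       \<or> (\<exists>a\<in>V. dominating_set V E {a})"
proof -
  let ?V1 = "{v\<in>V. f v = 1}" and ?V2 = "{v\<in>V. f v = 2}"
  have finV: "finite V" using sg_facts(1)[OF sg] .
  have le2: "\<forall>v\<in>V. f v \<le> 2" using f unfolding dom210_function_def by auto
  have nbr: "(\<Sum>u\<in>open_nbhd V E v. f u) = card {u\<in>open_nbhd V E v. f u = 1} + 2 * card {u\<in>open_nbhd V E v. f u = 2}"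
    for v
    using sum_split[OF sg_facts(4)[OF sg, of v], of f] le2 sg_facts(2)[OF sg, of v] by auto
  have c0: "f v = 0 \<Longrightarrow> v \<in> V \<Longrightarrow> (\<Sum>u\<in>open_nbhd V E v. f u) \<ge> 2" for v
    using f unfolding dom210_function_def by auto
  have c1: "f v = 1 \<Longrightarrow> v \<in> V \<Longrightarrow> (\<Sum>u\<in>open_nbhd V E v. f u) \<ge> 1" for v
    using f unfolding dom210_function_def by auto
  have sub1: "{u\<in>open_nbhd V E v. f u = 1} \<subseteq> ?V1" for v using sg_facts(2)[OF sg, of v] by auto
  have sub2: "{u\<in>open_nbhd V E v. f u = 2} \<subseteq> ?V2" for v using sg_facts(2)[OF sg, of v] by auto
  have fin1: "finite ?V1" and fin2: "finite ?V2" using finV by auto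
  have "card ?V2 = 0 \<or> card ?V2 = 1" using w by linarith
  then show ?thesis
  proof
    assume "card ?V2 = 0"
    then have V2e: "?V2 = {}" using fin2 by simp
    have "double_dominating_set V E ?V1"
      unfolding double_dominating_set_def
    proof (intro conjI ballI)
      show "?V1 \<subseteq> V" by auto
      fix v assume v: "v \<in> V"
      have e2: "{u\<in>open_nbhd V E v. f u = 2} = {}" using sub2[of v] V2e by blast
      have finN: "finite {u\<in>open_nbhd V E v. f u = 1}" using sg_facts(4)[OF sg, of v] by auto
      have "f v \<noteq> 2" using v V2e by auto
      then have "f v = 0 \<or> f v = 1" using le2 v by fastforce
      then show "2 \<le> card (closed_nbhd V E v \<inter> ?V1)"
      proof
        assume fv: "f v = 0"
        have "card {u\<in>open_nbhd V E v. f u = 1} \<ge> 2" using c0[OF fv v] nbr[of v] e2 by simp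
        moreover have "{u\<in>open_nbhd V E v. f u = 1} \<subseteq> closed_nbhd V E v \<inter> ?V1"
          using sg_facts(2)[OF sg, of v] unfolding closed_nbhd_def by auto
        moreover have "finite (closed_nbhd V E v \<inter> ?V1)" using fin1 by auto
        ultimately show ?thesis using card_mono[of "closed_nbhd V E v \<inter> ?V1" "{u\<in>open_nbhd V E v. f u = 1}"] by linarith
      next
        assume fv: "f v = 1"
        have "card {u\<in>open_nbhd V E v. f u = 1} \<ge> 1" using c1[OF fv v] nbr[of v] e2 by simp
        moreover have "closed_nbhd V E v \<inter> ?V1 = insert v {u\<in>open_nbhd V E v. f u = 1}"
          using sg_facts(2)[OF sg, of v] fv v unfolding closed_nbhd_def by auto
        moreover have "v \<notin> {u\<in>open_nbhd V E v. f u = 1}" using sg_facts(3)[OF sg, of v] by auto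
        ultimately show ?thesis using finN by simp
      qed
    qed
    then show ?thesis using V2e by blast
  next
    assume "card ?V2 = 1"
    then obtain a where V2a: "?V2 = {a}" by (meson card_1_singletonE)
    have aV: "a \<in> V" using V2a by auto
    have cV1: "card ?V1 \<le> 1" using w \<open>card ?V2 = 1\<close> by linarith
    have "dominating_set V E {a}"
      unfolding dominating_set_def
    proof (intro conjI ballI)
      show "{a} \<subseteq> V" using aV by auto
      fix v assume v: "v \<in> V"
      show "closed_nbhd V E v \<inter> {a} \<noteq> {}"
      proof (cases "v = a")
        case True then show ?thesis unfolding closed_nbhd_def by auto
      next
        case False
        have s2: "{u\<in>open_nbhd V E v. f u = 2} \<subseteq> {a}" using sub2[of v] V2a by blast
        have "f v \<noteq> 2" using v V2a False by auto
        then have "f v = 0 \<or> f v = 1" using le2 v by fastforce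
        then have "card {u\<in>open_nbhd V E v. f u = 2} \<ge> 1"
        proof
          assume fv: "f v = 0"
          have "card {u\<in>open_nbhd V E v. f u = 1} \<le> 1"
            using card_mono[OF fin1 sub1[of v]] cV1 by linarith
          then show ?thesis using c0[OF fv v] nbr[of v] by linarith
        next
          assume fv: "f v = 1"
          have "v \<in> ?V1" using v fv by auto
          have "\<forall>x\<in>?V1. \<forall>y\<in>?V1. x = y"
            using card_le_Suc0_iff_eq[OF fin1] cV1 by simp
          then have "?V1 = {v}" using \<open>v \<in> ?V1\<close> by blast
          then have "{u\<in>open_nbhd V E v. f u = 1} = {}"
            using sub1[of v] sg_facts(3)[OF sg, of v] by auto
          then have "card {u\<in>open_nbhd V E v. f u = 1} = 0" by (simp only: card.empty)
          then show ?thesis using c1[OF fv v] nbr[of v] by linarith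
        qed
        then have "{u\<in>open_nbhd V E v. f u = 2} \<noteq> {}" by (metis card.empty not_one_le_zero)
        then have "a \<in> open_nbhd V E v" using s2 by blast
        then show ?thesis unfolding closed_nbhd_def by auto
      qed
    qed
    then show ?thesis using aV by blast
  qed
qed

theorem theorem37:
  fixes V :: "'a set" and E :: "'a \<Rightarrow> 'a \<Rightarrow> bool"
  assumes "simple_graph V E"
  shows "dom210_number V E = 3 \<longleftrightarrow>
         (no_isolated V E \<and> double_domination_number V E = 3 \<and> domination_number V E + 1 = 3)"
proof -
  note sg = assms
  have finV: "finite V" using sg_facts(1)[OF sg] .
  have f2: "dom210_function V E (\<lambda>_. 2)" unfolding dom210_function_def by auto
  have low210: "dom210_number V E \<le> sum g V" if "dom210_function V E g" for g
    unfolding dom210_number_def by (rule Least_le) (use that in blast)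
  have att210: "\<exists>f. dom210_function V E f \<and> sum f V = dom210_number V E"
    unfolding dom210_number_def by (rule LeastI_ex) (use f2 in blast)
  have lowg: "domination_number V E \<le> card D" if "dominating_set V E D" for D
    unfolding domination_number_def by (rule Least_le) (use that in blast)
  have lowg2: "double_domination_number V E \<le> card D" if "double_dominating_set V E D" for D
    unfolding double_domination_number_def by (rule Least_le) (use that in blast)
  have le2: "\<forall>v\<in>V. f v \<le> 2" if "dom210_function V E f" for f
    using that unfolding dom210_function_def by auto
  show ?thesis
  proof
    assume h: "dom210_number V E = 3"
    obtain f where f: "dom210_function V E f" and fs: "sum f V = 3" using att210 h by auto
    have lowall: "sum g V \<ge> 3" if "dom210_function V E g" for g using low210[OF that] h by simp
    have dlow: "card D \<ge> 2" if "dominating_set V E D" for D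
      using dom_to_f[OF sg that] lowall by fastforce
    have ddlow: "card D \<ge> 3" if "double_dominating_set V E D" for D
      using ddom_to_f[OF sg that] lowall by fastforce
    have w: "card {v\<in>V. f v = 1} + 2 * card {v\<in>V. f v = 2} = 3"
      using sum_split[OF finV le2[OF f]] fs by simp
    from keyK[OF sg f] w
    have "({v\<in>V. f v = 2} = {} \<and> double_dominating_set V E {v\<in>V. f v = 1})
       \<or> (\<exists>a\<in>V. dominating_set V E {a})" by simp
    moreover have "\<not> (\<exists>a\<in>V. dominating_set V E {a})" using dlow by fastforce
    ultimately have V2e: "{v\<in>V. f v = 2} = {}" and dd: "double_dominating_set V E {v\<in>V. f v = 1}"
      by auto
    let ?V1 = "{v\<in>V. f v = 1}"
    have c3: "card ?V1 = 3" using w V2e by simp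
    have g2: "double_domination_number V E = 3"
      unfolding double_domination_number_def
      by (rule Least_equality) (use dd c3 ddlow in auto)
    obtain z where z: "z \<in> ?V1" using c3 by (metis card.empty ex_in_conv zero_neq_numeral)
    have finV1: "finite ?V1" using finV by auto
    have cS: "card (?V1 - {z}) = 2" using c3 z finV1 by simp
    have domS: "dominating_set V E (?V1 - {z})"
      by (rule ddom_sub[OF dd, of z]) auto
    have g1: "domination_number V E = 2"
      unfolding domination_number_def
      by (rule Least_equality) (use domS cS dlow in auto)
    show "no_isolated V E \<and> double_domination_number V E = 3 \<and> domination_number V E + 1 = 3"
      using ddom_noiso[OF dd] g2 g1 by simp
  next
    assume h: "no_isolated V E \<and> double_domination_number V E = 3 \<and> domination_number V E + 1 = 3"
    have Vdd: "double_dominating_set V E V"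
      unfolding double_dominating_set_def
    proof (intro conjI ballI)
      fix v assume v: "v \<in> V"
      obtain u where u: "u \<in> open_nbhd V E v" using h v unfolding no_isolated_def by auto
      have uv: "u \<noteq> v" using u sg_facts(3)[OF sg, of v] by auto
      have "{u, v} \<subseteq> closed_nbhd V E v \<inter> V" using u v sg_facts(2)[OF sg, of v]
        unfolding closed_nbhd_def by auto
      then have "card {u, v} \<le> card (closed_nbhd V E v \<inter> V)" by (rule card_mono[rotated]) (use finV in auto)
      then show "2 \<le> card (closed_nbhd V E v \<inter> V)" using uv by simp
    qed simp
    have "\<exists>D. double_dominating_set V E D \<and> card D = double_domination_number V E"
      unfolding double_domination_number_def by (rule LeastI_ex) (use Vdd in blast)
    then obtain D where D: "double_dominating_set V E D" "card D = 3" using h by auto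
    have up: "dom210_number V E \<le> 3" using low210[OF conjunct1[OF ddom_to_f[OF sg D(1)]]]
      ddom_to_f[OF sg D(1)] D(2) by simp
    have lo: "\<not> dom210_number V E \<le> 2"
    proof
      assume "dom210_number V E \<le> 2"
      then obtain g where g: "dom210_function V E g" "sum g V \<le> 2" using att210 by auto
      have w: "card {v\<in>V. g v = 1} + 2 * card {v\<in>V. g v = 2} \<le> 2"
        using sum_split[OF finV le2[OF g(1)]] g(2) by simp
      from keyK[OF sg g(1)] w
      have "({v\<in>V. g v = 2} = {} \<and> double_dominating_set V E {v\<in>V. g v = 1})
         \<or> (\<exists>a\<in>V. dominating_set V E {a})" by simp
      then show False
      proof
        assume a: "{v\<in>V. g v = 2} = {} \<and> double_dominating_set V E {v\<in>V. g v = 1}"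
        then have "double_domination_number V E \<le> card {v\<in>V. g v = 1}" using lowg2 by blast
        then show False using a w h by simp
      next
        assume "\<exists>a\<in>V. dominating_set V E {a}"
        then have "domination_number V E \<le> 1" using lowg by fastforce
        then show False using h by simp
      qed
    qed
    show "dom210_number V E = 3" using up lo by simp
  qed
qed

end
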